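(* Under the standing assumptions below, for every $\zeta\in V^*$ and every $G\in\partial_B^{sw}S(\zeta)$, the operator $\mathrm{Id}+\alpha^{-1}PGP^*:L^2(\Omega)\to L^2(\Omega)$ is an isomorphism, and the operator norm of its inverse (as an operator on $L^2(\Omega)$) is at most $1$.
   Context: Standing assumptions: $(\Omega,\Sigma,\mu)$ is a complete finite measure space. $V$ is a real separable Hilbert space with $V\hookrightarrow L^2(\Omega)$ continuously, compactly and densely, and $[v]_{a_1}^{a_2}:=\min(a_2,\max(a_1,v))\in V$ for all $v\in V$, $a_1\le0\le a_2$; $V\hookrightarrow L^2(\Omega)\cong L^2(\Omega)^*\hookrightarrow V^*$ is a Gelfand triple. $A\in\mathcal{L}(V,V^* )$ is symmetric, satisfies $\langle Av,v\rangle_V\ge c\|v\|_V^2$ ($c>0$) and $\min(\langle Av,[v]_{a_1}^{a_2}\rangle_V,\langle A[v]_{a_1}^{a_2},v\rangle_V)\ge\langle A[v]_{a_1}^{a_2},[v]_{a_1}^{a_2}\rangle_V$ for all $v\in V$, $a_1\le0\le a_2$. $W$ is a real Hilbert space with $W\hookrightarrow L^2(\Omega)$ continuously and densely, $W\hookrightarrow L^2(\Omega)\cong L^2(\Omega)^*\hookrightarrow W^*$ a Gelfand triple. $L:W\to W^*$ is linear, continuous, bijective with inverse $P:=L^{-1}$, and $P^*\in\mathcal{L}(W^*,W)$ is its adjoint: $\langle w_1^*,Pw_2^*\rangle_W=\langle w_2^*,P^*w_1^*\rangle_W$. $K\subset V$ is nonempty, closed, convex with $v\in K,z\in V\Rightarrow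 v+\max(0,z)\in K$ and $v_1,v_2\in K\Rightarrow\min(v_1,v_2)\in K$. $\alpha>0$. $S:V^*\to V$ is the solution map $z\mapsto w$ of: $w\in K$, $\langle Aw-z,v-w\rangle_V\ge0$ for all $v\in K$ (well defined and Lipschitz). $\partial_B^{sw}S(u):=\{G\in\mathcal{L}(V^*,V):\exists\{u_n\}\subset\mathcal{D}_S,\ u_n\to u\text{ in }V^*,\ S'(u_n)z\rightharpoonup Gz\text{ weakly in }V\ \forall z\in V^*\}$, where $\mathcal{D}_S$ is the set of Gâteaux differentiability points of $S:V^*\to V$. The composition $PGP^*$ acts on $L^2(\Omega)$ via $L^2(\Omega)\subset W^*\xrightarrow{P^*}W\subset L^2(\Omega)\subset V^*\xrightarrow{G}V\subset L^2(\Omega)\subset W^*\xrightarrow{P}W\subset L^2(\Omega)$. *)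

theory Defs
  imports "HOL-Analysis.Analysis"
begin

section \<open>L^2(Omega), represented by square-integrable functions modulo a.e. equality\<close>

definition L2 :: "'a measure \<Rightarrow> ('a \<Rightarrow> real) set" where
  "L2 M = {f. f \<in> borel_measurable M \<and> integrable M (\<lambda>x. (f x)\<^sup>2)}"

definition L2norm :: "'a measure \<Rightarrow> ('a \<Rightarrow> real) \<Rightarrow> real" where
  "L2norm M f = sqrt (LINT x|M. (f x)\<^sup>2)"

definition ae_eq :: "'a measure \<Rightarrow> ('a \<Rightarrow> real) \<Rightarrow> ('a \<Rightarrow> real) \<Rightarrow> bool" where
  "ae_eq M f g \<longleftrightarrow> (AE x in M. f x = g x)"

text \<open>iota maps an element of the Hilbert space to a representative of its L^2 class.\<close>
definition cont_dense_embedding :: "'a measure \<Rightarrow> ('v::real_inner \<Rightarrow> 'a \<Rightarrow> real) \<Rightarrow> bool" where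
  "cont_dense_embedding M \<iota> \<longleftrightarrow>
     (\<forall>v. \<iota> v \<in> L2 M) \<and>
     (\<forall>x y. ae_eq M (\<iota> (x + y)) (\<lambda>t. \<iota> x t + \<iota> y t)) \<and>
     (\<forall>c x. ae_eq M (\<iota> (c *\<^sub>R x)) (\<lambda>t. c * \<iota> x t)) \<and>
     (\<exists>C. \<forall>v. L2norm M (\<iota> v) \<le> C * norm v) \<and>
     (\<forall>v. ae_eq M (\<iota> v) (\<lambda>t. 0) \<longrightarrow> v = 0) \<and>
     (\<forall>f\<in>L2 M. \<forall>e>0. \<exists>v. L2norm M (\<lambda>t. \<iota> v t - f t) < e)"

definition compact_embedding :: "'a measure \<Rightarrow> ('v::real_inner \<Rightarrow> 'a \<Rightarrow> real) \<Rightarrow> bool" where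
  "compact_embedding M \<iota> \<longleftrightarrow>
     (\<forall>x :: nat \<Rightarrow> 'v. (\<exists>B. \<forall>n. norm (x n) \<le> B) \<longrightarrow>
        (\<exists>r f. strict_mono r \<and> f \<in> L2 M \<and>
           (\<lambda>n. L2norm M (\<lambda>t. \<iota> (x (r n)) t - f t)) \<longlonglongrightarrow> 0))"

definition dual_emb :: "'a measure \<Rightarrow> ('v::real_normed_vector \<Rightarrow> 'a \<Rightarrow> real) \<Rightarrow> ('a \<Rightarrow> real) \<Rightarrow> ('v \<Rightarrow>\<^sub>L real)" where
  "dual_emb M \<iota> f = Blinfun (\<lambda>v. LINT x|M. f x * \<iota> v x)"

text \<open>Truncation [v]_{a1}^{a2} as an element of V (the unique element whose L^2 class is the
  pointwise truncation).\<close>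
definition trunc :: "'a measure \<Rightarrow> ('v \<Rightarrow> 'a \<Rightarrow> real) \<Rightarrow> real \<Rightarrow> real \<Rightarrow> 'v \<Rightarrow> 'v" where
  "trunc M \<iota> a1 a2 v = (THE w. ae_eq M (\<iota> w) (\<lambda>x. min a2 (max a1 (\<iota> v x))))"

definition VI_solution :: "('v::real_normed_vector \<Rightarrow>\<^sub>L ('v \<Rightarrow>\<^sub>L real)) \<Rightarrow> 'v set \<Rightarrow> ('v \<Rightarrow>\<^sub>L real) \<Rightarrow> 'v" where
  "VI_solution A K z = (THE w. w \<in> K \<and> (\<forall>v\<in>K. blinfun_apply (A w - z) (v - w) \<ge> 0))"

definition gateaux_deriv :: "('x::real_normed_vector \<Rightarrow> 'y::real_normed_vector) \<Rightarrow> 'x \<Rightarrow> ('x \<Rightarrow>\<^sub>L 'y) \<Rightarrow> bool" where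
  "gateaux_deriv S u D \<longleftrightarrow>
     (\<forall>h. ((\<lambda>t::real. (1 / t) *\<^sub>R (S (u + t *\<^sub>R h) - S u)) \<longlongrightarrow> blinfun_apply D h) (at 0))"

definition gateaux_points :: "('x::real_normed_vector \<Rightarrow> 'y::real_normed_vector) \<Rightarrow> 'x set" where
  "gateaux_points S = {u. \<exists>D. gateaux_deriv S u D}"

definition weak_conv :: "(nat \<Rightarrow> 'v::real_inner) \<Rightarrow> 'v \<Rightarrow> bool" where
  "weak_conv x y \<longleftrightarrow> (\<forall>v. (\<lambda>n. inner (x n) v) \<longlonglongrightarrow> inner y v)"

definition bouligand_sw :: "('x::real_normed_vector \<Rightarrow> 'y::real_inner) \<Rightarrow> 'x \<Rightarrow> ('x \<Rightarrow>\<^sub>L 'y) set" where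
  "bouligand_sw S u = {G. \<exists>un Dn. (\<forall>n. un n \<in> gateaux_points S \<and> gateaux_deriv S (un n) (Dn n)) \<and>
      un \<longlonglongrightarrow> u \<and> (\<forall>z. weak_conv (\<lambda>n. blinfun_apply (Dn n) z) (blinfun_apply G z))}"

end

theory Submission
  imports Defs
begin


lemma VI_exists:
  fixes A :: "'v::{real_inner,complete_space} \<Rightarrow>\<^sub>L 'v \<Rightarrow>\<^sub>L real" and z :: "'v \<Rightarrow>\<^sub>L real"
  assumes sym: "\<And>x y. A x y = A y x" and c: "c > 0" and coer: "\<And>v. A v v \<ge> c * (norm v)\<^sup>2"
    and K: "K \<noteq> {}" "closed K" "convex K"
  shows "\<exists>w\<in>K. \<forall>v\<in>K. blinfun_apply (A w - z) (v - w) \<ge> 0"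
proof -
  define J where "J = (\<lambda>w. A w w / 2 - z w)"
  have Jlow: "J w \<ge> - (norm z)\<^sup>2 / (2*c)" for w
  proof -
    have zw: "\<bar>z w\<bar> \<le> norm z * norm w" using norm_blinfun[of z w] by simp
    have "0 \<le> (c * norm w - norm z)\<^sup>2 / (2*c)" using c by simp
    also have "\<dots> = c/2 * (norm w)\<^sup>2 - norm z * norm w + (norm z)\<^sup>2/(2*c)"
      using c by (simp add: power2_eq_square field_simps)
    finally have "- (norm z)\<^sup>2 / (2*c) \<le> c/2 * (norm w)\<^sup>2 - norm z * norm w" by simp
    also have "\<dots> \<le> J w" unfolding J_def using coer[of w] zw by simp
    finally show ?thesis .
  qed
  define m where "m = Inf (J ` K)"
  have bdd: "bdd_below (J ` K)" using Jlow by (auto intro!: bdd_belowI)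
  have m_le: "m \<le> J v" if "v \<in> K" for v unfolding m_def using bdd that by (simp add: cInf_lower)
  have "\<forall>n. \<exists>w. w \<in> K \<and> J w < m + inverse (real (Suc n))"
  proof
    fix n
    have "Inf (J ` K) < m + inverse (real (Suc n))" unfolding m_def by simp
    from cInf_lessD[OF _ this] K(1) show "\<exists>w. w \<in> K \<and> J w < m + inverse (real (Suc n))" by auto
  qed
  then obtain ws where ws: "\<And>n. ws n \<in> K" "\<And>n. J (ws n) < m + inverse (real (Suc n))"
    by metis
  have par: "J a + J b - 2 * J ((1/2) *\<^sub>R a + (1/2) *\<^sub>R b) = A (a - b) (a - b) / 4" for a b
    unfolding J_def using sym[of b a]
    by (simp add: blinfun.bilinear_simps algebra_simps)
  have mid: "c/4 * (norm (a - b))\<^sup>2 \<le> J a + J b - 2*m" if "a \<in> K" "b \<in> K" for a b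
  proof -
    have "(1/2) *\<^sub>R a + (1/2) *\<^sub>R b \<in> K" using K(3) that by (auto intro!: convexD)
    hence "m \<le> J ((1/2) *\<^sub>R a + (1/2) *\<^sub>R b)" by (rule m_le)
    thus ?thesis using par[of a b] coer[of "a - b"] by simp
  qed
  have "Cauchy ws"
  proof (rule metric_CauchyI)
    fix e :: real assume e: "e > 0"
    obtain N where N: "inverse (real (Suc N)) < c * e\<^sup>2 / 8"
      using reals_Archimedean[of "c * e\<^sup>2 / 8"] c e by auto
    show "\<exists>N. \<forall>m\<ge>N. \<forall>n\<ge>N. dist (ws m) (ws n) < e"
    proof (intro exI allI impI)
      fix p q assume pq: "N \<le> p" "N \<le> q"
      have ip: "inverse (real (Suc p)) \<le> inverse (real (Suc N))" using pq by (simp add: field_simps)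
      have iq: "inverse (real (Suc q)) \<le> inverse (real (Suc N))" using pq by (simp add: field_simps)
      have "c/4 * (norm (ws p - ws q))\<^sup>2 \<le> J (ws p) + J (ws q) - 2*m" using mid ws(1) by blast
      also have "\<dots> < 2 * inverse (real (Suc N))" using ws(2)[of p] ws(2)[of q] ip iq by linarith
      also have "\<dots> < c * e\<^sup>2 / 4" using N by simp
      finally have "(norm (ws p - ws q))\<^sup>2 < e\<^sup>2" using c by simp
      hence "norm (ws p - ws q) < e" using e by (simp add: power_less_imp_less_base)
      thus "dist (ws p) (ws q) < e" by (simp add: dist_norm)
    qed
  qed
  then obtain w where lim: "ws \<longlonglongrightarrow> w" using Cauchy_convergent_iff convergent_def by blast
  have wK: "w \<in> K" using closed_sequentially[OF K(2) _ lim] ws(1) by blast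
  have "(\<lambda>n. J (ws n)) \<longlonglongrightarrow> J w"
    unfolding J_def
    by (intro tendsto_intros lim) simp
  moreover have "(\<lambda>n. m + inverse (real (Suc n))) \<longlonglongrightarrow> m + 0"
    by (intro tendsto_intros LIMSEQ_inverse_real_of_nat)
  ultimately have Jw: "J w \<le> m"
    using ws(2) by (intro LIMSEQ_le[of _ _ "\<lambda>n. m + inverse (real (Suc n))"]) (auto intro: less_imp_le)
  show ?thesis
  proof (intro bexI[OF _ wK] ballI)
    fix v assume v: "v \<in> K"
    define X where "X = A w (v - w) - z (v - w)"
    define Y where "Y = A (v - w) (v - w)"
    have Y0: "Y \<ge> 0" unfolding Y_def using coer[of "v - w"] c by (smt (verit) mult_nonneg_nonneg zero_le_power2)
    have key: "0 \<le> X + t/2 * Y" if t: "0 < t" "t \<le> 1" for t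
    proof -
      have "w + t *\<^sub>R (v - w) = (1 - t) *\<^sub>R w + t *\<^sub>R v" by (simp add: algebra_simps)
      also have "\<dots> \<in> K" using K(3) wK v t by (auto intro!: convexD)
      finally have "m \<le> J (w + t *\<^sub>R (v - w))" by (rule m_le)
      hence "J w \<le> J (w + t *\<^sub>R (v - w))" using Jw by simp
      moreover have "J (w + t *\<^sub>R (v - w)) - J w = t * X + t\<^sup>2/2 * Y"
        unfolding J_def X_def Y_def using sym[of "v - w" w]
        by (simp add: blinfun.bilinear_simps algebra_simps power2_eq_square) (simp add: field_simps)
      ultimately have "0 \<le> t * (X + t/2 * Y)" by (simp add: algebra_simps power2_eq_square)
      thus ?thesis using t by (simp add: zero_le_mult_iff)
    qed
    have "X \<ge> 0"
    proof (rule ccontr)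
      assume "\<not> X \<ge> 0" hence X: "X < 0" by simp
      define t where "t = min 1 (-X/(Y+1))"
      have t: "0 < t" "t \<le> 1" unfolding t_def using X Y0 by (auto simp: divide_neg_pos)
      have "t * Y \<le> (-X/(Y+1)) * Y" unfolding t_def using Y0 by (intro mult_right_mono) auto
      also have "\<dots> < -X" using X Y0 by (simp add: field_simps)
      finally have "t/2 * Y < -X" using Y0 t X by simp
      with key[OF t] show False by simp
    qed
    thus "blinfun_apply (A w - z) (v - w) \<ge> 0" unfolding X_def by (simp add: blinfun.bilinear_simps)
  qed
qed

lemma riesz:
  fixes z :: "'v::{real_inner,complete_space} \<Rightarrow>\<^sub>L real"
  shows "\<exists>r. \<forall>x. z x = inner x r"
proof -
  define A :: "'v \<Rightarrow>\<^sub>L 'v \<Rightarrow>\<^sub>L real" where "A = Blinfun blinfun_inner_left"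
  have Aapp: "A x y = inner y x" for x y
    unfolding A_def by (simp add: bounded_linear_Blinfun_apply bounded_linear_blinfun_inner_left)
  obtain w where w: "\<forall>v\<in>UNIV. blinfun_apply (A w - z) (v - w) \<ge> 0"
    using VI_exists[of A 1 UNIV z] by (auto simp: Aapp inner_commute power2_norm_eq_inner)
  show ?thesis
  proof (intro exI allI)
    fix x
    have "blinfun_apply (A w - z) ((w + x) - w) \<ge> 0" using w by blast
    moreover have "blinfun_apply (A w - z) ((w - x) - w) \<ge> 0" using w by blast
    ultimately show "z x = inner x w" by (simp add: blinfun.bilinear_simps Aapp)
  qed
qed




lemma VI_sol:
  fixes A :: "'v::{real_inner,complete_space} \<Rightarrow>\<^sub>L 'v \<Rightarrow>\<^sub>L real" and z :: "'v \<Rightarrow>\<^sub>L real"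
  assumes sym: "\<And>x y. A x y = A y x" and c: "c > 0" and coer: "\<And>v. A v v \<ge> c * (norm v)\<^sup>2"
    and K: "K \<noteq> {}" "closed K" "convex K"
  shows "VI_solution A K z \<in> K \<and> (\<forall>v\<in>K. blinfun_apply (A (VI_solution A K z) - z) (v - VI_solution A K z) \<ge> 0)"
proof -
  let ?P = "\<lambda>w. w \<in> K \<and> (\<forall>v\<in>K. blinfun_apply (A w - z) (v - w) \<ge> 0)"
  obtain w where w: "?P w" using VI_exists[OF sym c coer K] by blast
  have uniq: "w2 = w1" if "?P w1" "?P w2" for w1 w2
  proof -
    have "blinfun_apply (A w1 - z) (w2 - w1) \<ge> 0" "blinfun_apply (A w2 - z) (w1 - w2) \<ge> 0"
      using that by auto
    hence "A (w1 - w2) (w1 - w2) \<le> 0" by (simp add: blinfun.bilinear_simps algebra_simps)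
    hence "c * (norm (w1 - w2))\<^sup>2 \<le> 0" using coer[of "w1 - w2"] by linarith
    hence "norm (w1 - w2) = 0" using c by (simp add: mult_le_0_iff)
    thus ?thesis by simp
  qed
  have "\<exists>!w. ?P w" using w uniq by blast
  from theI'[OF this] show ?thesis unfolding VI_solution_def .
qed

lemma S_mono:
  fixes A :: "'v::{real_inner,complete_space} \<Rightarrow>\<^sub>L 'v \<Rightarrow>\<^sub>L real"
  assumes sym: "\<And>x y. A x y = A y x" and c: "c > 0" and coer: "\<And>v. A v v \<ge> c * (norm v)\<^sup>2"
    and K: "K \<noteq> {}" "closed K" "convex K"
  shows "blinfun_apply (z1 - z2) (VI_solution A K z1 - VI_solution A K z2) \<ge> 0"
proof -
  define S1 where "S1 = VI_solution A K z1"
  define S2 where "S2 = VI_solution A K z2"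
  have 1: "S1 \<in> K" "\<forall>v\<in>K. blinfun_apply (A S1 - z1) (v - S1) \<ge> 0"
    using VI_sol[OF sym c coer K, of z1] unfolding S1_def by auto
  have 2: "S2 \<in> K" "\<forall>v\<in>K. blinfun_apply (A S2 - z2) (v - S2) \<ge> 0"
    using VI_sol[OF sym c coer K, of z2] unfolding S2_def by auto
  have a: "blinfun_apply (A S1 - z1) (S2 - S1) \<ge> 0" using 1 2 by auto
  have b: "blinfun_apply (A S2 - z2) (S1 - S2) \<ge> 0" using 1 2 by auto
  have "A (S1 - S2) (S1 - S2) \<ge> 0" using coer[of "S1 - S2"] c
    by (smt (verit) mult_nonneg_nonneg zero_le_power2)
  with a b have "blinfun_apply (z1 - z2) (S1 - S2) \<ge> 0"
    by (simp add: blinfun.bilinear_simps algebra_simps)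
  thus ?thesis unfolding S1_def S2_def .
qed

lemma gateaux_pos:
  fixes S :: "('v::real_normed_vector \<Rightarrow>\<^sub>L real) \<Rightarrow> 'v"
  assumes mono: "\<And>z1 z2. blinfun_apply (z1 - z2) (S z1 - S z2) \<ge> 0"
    and D: "gateaux_deriv S u D"
  shows "blinfun_apply h (blinfun_apply D h) \<ge> 0"
proof -
  have lim: "((\<lambda>t::real. (1 / t) *\<^sub>R (S (u + t *\<^sub>R h) - S u)) \<longlongrightarrow> blinfun_apply D h) (at 0)"
    using D unfolding gateaux_deriv_def by blast
  have lim2: "((\<lambda>t::real. blinfun_apply h ((1 / t) *\<^sub>R (S (u + t *\<^sub>R h) - S u))) \<longlongrightarrow> blinfun_apply h (blinfun_apply D h)) (at 0)"
    by (intro tendsto_intros lim)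
  have ev: "\<forall>\<^sub>F t in at (0::real). 0 \<le> blinfun_apply h ((1 / t) *\<^sub>R (S (u + t *\<^sub>R h) - S u))"
    unfolding eventually_at_filter
  proof (intro always_eventually allI impI)
    fix t :: real assume t: "t \<noteq> 0"
    define d where "d = S (u + t *\<^sub>R h) - S u"
    have "blinfun_apply ((u + t *\<^sub>R h) - u) d \<ge> 0" unfolding d_def by (rule mono)
    hence "t * blinfun_apply h d \<ge> 0" by (simp add: blinfun.bilinear_simps)
    hence "(t * blinfun_apply h d) / (t * t) \<ge> 0" using t by (intro divide_nonneg_pos) (auto simp: zero_less_mult_iff)
    moreover have "(t * blinfun_apply h d) / (t * t) = blinfun_apply h ((1 / t) *\<^sub>R d)"
      using t by (simp add: blinfun.bilinear_simps)
    ultimately show "0 \<le> blinfun_apply h ((1 / t) *\<^sub>R (S (u + t *\<^sub>R h) - S u))"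
      unfolding d_def by simp
  qed
  show ?thesis by (rule tendsto_lowerbound[OF lim2 ev]) simp
qed

lemma G_pos:
  fixes S :: "('v::{real_inner,complete_space} \<Rightarrow>\<^sub>L real) \<Rightarrow> 'v"
  assumes mono: "\<And>z1 z2. blinfun_apply (z1 - z2) (S z1 - S z2) \<ge> 0"
    and G: "G \<in> bouligand_sw S \<zeta>"
  shows "blinfun_apply z (blinfun_apply G z) \<ge> 0"
proof -
  obtain un Dn where D: "\<And>n. gateaux_deriv S (un n) (Dn n)"
    and wc: "\<And>z. weak_conv (\<lambda>n. blinfun_apply (Dn n) z) (blinfun_apply G z)"
    using G unfolding bouligand_sw_def by blast
  obtain r where r: "\<And>x. z x = inner x r" using riesz[of z] by blast
  have "(\<lambda>n. inner (blinfun_apply (Dn n) z) r) \<longlonglongrightarrow> inner (blinfun_apply G z) r"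
    using wc[of z] unfolding weak_conv_def by blast
  moreover have "\<And>n. inner (blinfun_apply (Dn n) z) r \<ge> 0"
    using gateaux_pos[OF mono D] r by metis
  ultimately have "inner (blinfun_apply G z) r \<ge> 0" by (intro LIMSEQ_le_const) auto
  thus ?thesis using r by simp
qed




lemma quad_disc:
  fixes a b c :: real
  assumes "\<And>t. 0 \<le> a + 2*t*b + t\<^sup>2*c" and "c \<ge> 0"
  shows "b\<^sup>2 \<le> a*c"
proof (cases "c = 0")
  case True
  have a0: "0 \<le> a" using assms(1)[of 0] by simp
  have "b = 0"
  proof (rule ccontr)
    assume "b \<noteq> 0"
    have h: "0 \<le> a + 2*(-(a+1)/(2*b))*b" using assms(1)[of "-(a+1)/(2*b)"] True by simp
    have "2*(-(a+1)/(2*b))*b = -(a+1)" using \<open>b\<noteq>0\<close> by (simp add: field_simps)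
    with h show False by simp
  qed
  thus ?thesis using True a0 by simp
next
  case False
  hence c: "c > 0" using assms(2) by simp
  have h: "0 \<le> a + 2*(-b/c)*b + (-b/c)\<^sup>2*c" using assms(1) by blast
  have "a + 2*(-b/c)*b + (-b/c)\<^sup>2*c = (a*c - b\<^sup>2)/c" using c
    by (simp add: power2_eq_square field_simps)
  with h c show ?thesis by (simp add: divide_nonneg_pos zero_le_divide_iff)
qed

lemma L2_meas: "f \<in> L2 M \<Longrightarrow> f \<in> borel_measurable M" unfolding L2_def by auto
lemma L2_sq: "f \<in> L2 M \<Longrightarrow> integrable M (\<lambda>x. (f x)\<^sup>2)" unfolding L2_def by auto

lemma L2_prod:
  assumes "f \<in> L2 M" "g \<in> L2 M"
  shows "integrable M (\<lambda>x. f x * g x)"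
proof (rule Bochner_Integration.integrable_bound[of M "\<lambda>x. (f x)\<^sup>2 + (g x)\<^sup>2"])
  show "integrable M (\<lambda>x. (f x)\<^sup>2 + (g x)\<^sup>2)" by (intro Bochner_Integration.integrable_add L2_sq assms)
  show "(\<lambda>x. f x * g x) \<in> borel_measurable M" by (intro borel_measurable_times L2_meas assms)
  have "\<bar>f x * g x\<bar> \<le> (f x)\<^sup>2 + (g x)\<^sup>2" for x
  proof -
    have "0 \<le> (\<bar>f x\<bar> - \<bar>g x\<bar>)\<^sup>2" by simp
    hence "2 * (\<bar>f x\<bar> * \<bar>g x\<bar>) \<le> (f x)\<^sup>2 + (g x)\<^sup>2" by (simp add: power2_eq_square algebra_simps)
    moreover have "\<bar>f x\<bar> * \<bar>g x\<bar> \<ge> 0" by simp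
    ultimately show ?thesis unfolding abs_mult by linarith
  qed
  thus "AE x in M. norm (f x * g x) \<le> norm ((f x)\<^sup>2 + (g x)\<^sup>2)" by simp
qed

lemma L2_add: "f \<in> L2 M \<Longrightarrow> g \<in> L2 M \<Longrightarrow> (\<lambda>x. f x + g x) \<in> L2 M"
proof -
  assume a: "f \<in> L2 M" "g \<in> L2 M"
  have e: "(\<lambda>x. (f x + g x)\<^sup>2) = (\<lambda>x. (f x)\<^sup>2 + 2 * (f x * g x) + (g x)\<^sup>2)"
    by (simp add: power2_eq_square algebra_simps)
  show ?thesis unfolding L2_def using a L2_meas[OF a(1)] L2_meas[OF a(2)]
    by (auto simp: e intro!: integrable_add L2_sq L2_prod integrable_mult_right)
qed

lemma L2_scale: "f \<in> L2 M \<Longrightarrow> (\<lambda>x. r * f x) \<in> L2 M"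
proof -
  assume a: "f \<in> L2 M"
  have e: "(\<lambda>x. (r * f x)\<^sup>2) = (\<lambda>x. r\<^sup>2 * (f x)\<^sup>2)" by (simp add: power2_eq_square algebra_simps)
  show ?thesis unfolding L2_def using a L2_meas[OF a]
    by (auto simp: e intro!: integrable_mult_right L2_sq)
qed

lemma L2_diff: "f \<in> L2 M \<Longrightarrow> g \<in> L2 M \<Longrightarrow> (\<lambda>x. f x - g x) \<in> L2 M"
  using L2_add[of f M "\<lambda>x. (-1) * g x"] L2_scale[of g M "-1"] by simp

lemma L2_zero: "(\<lambda>x. 0) \<in> L2 M" unfolding L2_def by simp

lemma L2norm_nonneg: "L2norm M f \<ge> 0"
  unfolding L2norm_def by simp

lemma L2norm_sq: "f \<in> L2 M \<Longrightarrow> (L2norm M f)\<^sup>2 = (LINT x|M. (f x)\<^sup>2)"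
  unfolding L2norm_def by (simp add: integral_nonneg_AE)

lemma CS_sq:
  assumes f: "f \<in> L2 M" and g: "g \<in> L2 M"
  shows "(LINT x|M. f x * g x)\<^sup>2 \<le> (LINT x|M. (f x)\<^sup>2) * (LINT x|M. (g x)\<^sup>2)"
proof (rule quad_disc)
  fix t :: real
  have e: "(\<lambda>x. (f x + t * g x)\<^sup>2) = (\<lambda>x. (f x)\<^sup>2 + 2 * t * (f x * g x) + t\<^sup>2 * (g x)\<^sup>2)"
    by (simp add: power2_eq_square algebra_simps)
  have "0 \<le> (LINT x|M. (f x + t * g x)\<^sup>2)" by (simp add: integral_nonneg_AE)
  also have "\<dots> = (LINT x|M. (f x)\<^sup>2) + 2 * t * (LINT x|M. f x * g x) + t\<^sup>2 * (LINT x|M. (g x)\<^sup>2)"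
    unfolding e using L2_sq[OF f] L2_sq[OF g] L2_prod[OF f g] by simp
  finally show "0 \<le> (LINT x|M. (f x)\<^sup>2) + 2 * t * (LINT x|M. f x * g x) + t\<^sup>2 * (LINT x|M. (g x)\<^sup>2)" .
qed (simp add: integral_nonneg_AE)

lemma CS:
  assumes f: "f \<in> L2 M" and g: "g \<in> L2 M"
  shows "\<bar>LINT x|M. f x * g x\<bar> \<le> L2norm M f * L2norm M g"
proof -
  have "\<bar>LINT x|M. f x * g x\<bar> = sqrt ((LINT x|M. f x * g x)\<^sup>2)" by simp
  also have "\<dots> \<le> sqrt ((LINT x|M. (f x)\<^sup>2) * (LINT x|M. (g x)\<^sup>2))"
    using CS_sq[OF f g] by (rule real_sqrt_le_mono)
  also have "\<dots> = L2norm M f * L2norm M g" unfolding L2norm_def by (simp add: real_sqrt_mult)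
  finally show ?thesis .
qed

lemma ae_eq_L2norm:
  assumes "f \<in> borel_measurable M" "g \<in> borel_measurable M" "ae_eq M f g"
  shows "L2norm M f = L2norm M g"
proof -
  have ae: "AE x in M. (f x)\<^sup>2 = (g x)\<^sup>2" using assms(3) unfolding ae_eq_def by eventually_elim simp
  have "(LINT x|M. (f x)\<^sup>2) = (LINT x|M. (g x)\<^sup>2)"
    by (rule integral_cong_AE[OF _ _ ae]) (intro borel_measurable_power assms(1,2))+
  thus ?thesis unfolding L2norm_def by simp
qed

lemma emb_parts:
  assumes "cont_dense_embedding M \<iota>"
  shows "\<forall>v. \<iota> v \<in> L2 M" "\<forall>x y. ae_eq M (\<iota> (x + y)) (\<lambda>t. \<iota> x t + \<iota> y t)"
    "\<forall>c x. ae_eq M (\<iota> (c *\<^sub>R x)) (\<lambda>t. c * \<iota> x t)"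
    "\<exists>C. \<forall>v. L2norm M (\<iota> v) \<le> C * norm v"
  using assms unfolding cont_dense_embedding_def
  by (rule conjunct1, rule conjunct1[OF conjunct2], rule conjunct1[OF conjunct2[OF conjunct2]],
      rule conjunct1[OF conjunct2[OF conjunct2[OF conjunct2]]])

lemma emb_const:
  assumes "cont_dense_embedding M \<iota>"
  obtains C where "C \<ge> 0" "\<And>v. L2norm M (\<iota> v) \<le> C * norm v"
proof -
  obtain C where C: "\<And>v. L2norm M (\<iota> v) \<le> C * norm v" using emb_parts(4)[OF assms] by blast
  have "L2norm M (\<iota> v) \<le> max C 0 * norm v" for v
  proof -
    have "C * norm v \<le> max C 0 * norm v" by (intro mult_right_mono) auto
    thus ?thesis using C[of v] by linarith
  qed
  moreover have "max C 0 \<ge> 0" by simp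
  ultimately show ?thesis using that by blast
qed

lemma emb_L2: "cont_dense_embedding M \<iota> \<Longrightarrow> \<iota> v \<in> L2 M"
  using emb_parts(1) by blast

lemma emb_add: "cont_dense_embedding M \<iota> \<Longrightarrow> ae_eq M (\<iota> (x + y)) (\<lambda>t. \<iota> x t + \<iota> y t)"
  using emb_parts(2) by blast

lemma emb_scale: "cont_dense_embedding M \<iota> \<Longrightarrow> ae_eq M (\<iota> (r *\<^sub>R x)) (\<lambda>t. r * \<iota> x t)"
  using emb_parts(3) by blast

lemma emb_diff:
  assumes e: "cont_dense_embedding M \<iota>"
  shows "ae_eq M (\<iota> (x - y)) (\<lambda>t. \<iota> x t - \<iota> y t)"
proof -
  have "AE t in M. \<iota> (x + (-1) *\<^sub>R y) t = \<iota> x t + \<iota> ((-1) *\<^sub>R y) t"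
    using emb_add[OF e] unfolding ae_eq_def by blast
  moreover have "AE t in M. \<iota> ((-1) *\<^sub>R y) t = (-1) * \<iota> y t"
    using emb_scale[OF e] unfolding ae_eq_def by blast
  ultimately show ?thesis unfolding ae_eq_def by eventually_elim simp
qed

lemma dual_bl:
  assumes e: "cont_dense_embedding M \<iota>" and f: "f \<in> L2 M"
  shows "bounded_linear (\<lambda>v. LINT x|M. f x * \<iota> v x)"
proof -
  obtain C where C: "C \<ge> 0" "\<And>v. L2norm M (\<iota> v) \<le> C * norm v" using emb_const[OF e] by blast
  have m: "\<And>v. \<iota> v \<in> borel_measurable M" using emb_L2[OF e] L2_meas by blast
  have mf: "f \<in> borel_measurable M" using f L2_meas by blast
  show ?thesis
  proof (rule bounded_linear_intro[where K = "L2norm M f * C"])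
    fix x y
    have ae: "AE t in M. f t * \<iota> (x + y) t = f t * \<iota> x t + f t * \<iota> y t"
      using emb_add[OF e, of x y] unfolding ae_eq_def by eventually_elim (simp add: algebra_simps)
    have "(LINT t|M. f t * \<iota> (x + y) t) = (LINT t|M. f t * \<iota> x t + f t * \<iota> y t)"
      by (rule integral_cong_AE[OF _ _ ae]) (intro borel_measurable_times borel_measurable_add mf m)+
    also have "\<dots> = (LINT t|M. f t * \<iota> x t) + (LINT t|M. f t * \<iota> y t)"
      using L2_prod[OF f emb_L2[OF e]] by simp
    finally show "(LINT t|M. f t * \<iota> (x + y) t) = (LINT t|M. f t * \<iota> x t) + (LINT t|M. f t * \<iota> y t)" .
  next
    fix r x
    have ae: "AE t in M. f t * \<iota> (r *\<^sub>R x) t = r * (f t * \<iota> x t)"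
      using emb_scale[OF e, of r x] unfolding ae_eq_def by eventually_elim (simp add: algebra_simps)
    have "(LINT t|M. f t * \<iota> (r *\<^sub>R x) t) = (LINT t|M. r * (f t * \<iota> x t))"
      by (rule integral_cong_AE[OF _ _ ae]) (intro borel_measurable_times borel_measurable_const mf m)+
    thus "(LINT t|M. f t * \<iota> (r *\<^sub>R x) t) = r *\<^sub>R (LINT t|M. f t * \<iota> x t)" by simp
  next
    fix x
    have "\<bar>LINT t|M. f t * \<iota> x t\<bar> \<le> L2norm M f * L2norm M (\<iota> x)" by (rule CS[OF f emb_L2[OF e]])
    also have "\<dots> \<le> L2norm M f * (C * norm x)" using C(2)[of x] L2norm_nonneg by (intro mult_left_mono)
    finally show "norm (LINT t|M. f t * \<iota> x t) \<le> norm x * (L2norm M f * C)" by (simp add: algebra_simps)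
  qed
qed

lemma dual_apply:
  assumes e: "cont_dense_embedding M \<iota>" and f: "f \<in> L2 M"
  shows "blinfun_apply (dual_emb M \<iota> f) v = (LINT x|M. f x * \<iota> v x)"
  unfolding dual_emb_def using bounded_linear_Blinfun_apply[OF dual_bl[OF e f]] by simp

lemma dual_norm:
  assumes e: "cont_dense_embedding M \<iota>" and C: "C \<ge> 0" "\<And>v. L2norm M (\<iota> v) \<le> C * norm v"
    and f: "f \<in> L2 M"
  shows "norm (dual_emb M \<iota> f) \<le> C * L2norm M f"
proof (rule norm_blinfun_bound)
  show "0 \<le> C * L2norm M f" using C(1) L2norm_nonneg[of M f] by simp
  fix v
  have "\<bar>LINT t|M. f t * \<iota> v t\<bar> \<le> L2norm M f * L2norm M (\<iota> v)" by (rule CS[OF f emb_L2[OF e]])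
  also have "\<dots> \<le> L2norm M f * (C * norm v)" using C(2)[of v] L2norm_nonneg by (intro mult_left_mono)
  finally show "norm (blinfun_apply (dual_emb M \<iota> f) v) \<le> C * L2norm M f * norm v"
    by (simp add: dual_apply[OF e f] algebra_simps)
qed

lemma dual_cong:
  assumes "f \<in> borel_measurable M" "g \<in> borel_measurable M" "ae_eq M f g"
    and e: "cont_dense_embedding M \<iota>"
  shows "dual_emb M \<iota> f = dual_emb M \<iota> g"
proof -
  have "(LINT x|M. f x * \<iota> v x) = (LINT x|M. g x * \<iota> v x)" for v
  proof -
    have ae: "AE x in M. f x * \<iota> v x = g x * \<iota> v x" using assms(3) unfolding ae_eq_def by eventually_elim simp
    have m: "\<iota> v \<in> borel_measurable M" using emb_L2[OF e, of v] L2_meas by blast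
    show ?thesis by (rule integral_cong_AE[OF _ _ ae]) (intro borel_measurable_times assms(1,2) m)+
  qed
  thus ?thesis unfolding dual_emb_def by simp
qed

lemma dual_lin:
  assumes e: "cont_dense_embedding M \<iota>" and f: "f \<in> L2 M" and g: "g \<in> L2 M"
  shows "dual_emb M \<iota> (\<lambda>x. a * f x + b * g x) = a *\<^sub>R dual_emb M \<iota> f + b *\<^sub>R dual_emb M \<iota> g"
proof (rule blinfun_eqI)
  fix v
  have fg: "(\<lambda>x. a * f x + b * g x) \<in> L2 M" using f g by (intro L2_add L2_scale)
  have "(LINT x|M. (a * f x + b * g x) * \<iota> v x) = a * (LINT x|M. f x * \<iota> v x) + b * (LINT x|M. g x * \<iota> v x)"
    using L2_prod[OF f emb_L2[OF e]] L2_prod[OF g emb_L2[OF e]] by (simp add: algebra_simps)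
  thus "blinfun_apply (dual_emb M \<iota> (\<lambda>x. a * f x + b * g x)) v = blinfun_apply (a *\<^sub>R dual_emb M \<iota> f + b *\<^sub>R dual_emb M \<iota> g) v"
    by (simp add: dual_apply[OF e fg] dual_apply[OF e f] dual_apply[OF e g] blinfun.bilinear_simps)
qed

lemma comp_bl:
  assumes e1: "cont_dense_embedding M \<iota>" and e2: "cont_dense_embedding M \<kappa>"
  shows "bounded_linear (\<lambda>y. dual_emb M \<iota> (\<kappa> y))"
proof -
  obtain C1 where C1: "C1 \<ge> 0" "\<And>v. L2norm M (\<iota> v) \<le> C1 * norm v" using emb_const[OF e1] by blast
  obtain C2 where C2: "C2 \<ge> 0" "\<And>v. L2norm M (\<kappa> v) \<le> C2 * norm v" using emb_const[OF e2] by blast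
  have mk: "\<And>v. \<kappa> v \<in> borel_measurable M" using emb_L2[OF e2] L2_meas by blast
  show ?thesis
  proof (rule bounded_linear_intro[where K = "C1 * C2"])
    fix x y
    have "dual_emb M \<iota> (\<kappa> (x + y)) = dual_emb M \<iota> (\<lambda>t. 1 * \<kappa> x t + 1 * \<kappa> y t)"
      using emb_add[OF e2, of x y] mk by (intro dual_cong[OF _ _ _ e1]) auto
    also have "\<dots> = dual_emb M \<iota> (\<kappa> x) + dual_emb M \<iota> (\<kappa> y)"
      using dual_lin[OF e1 emb_L2[OF e2, of x] emb_L2[OF e2, of y], where a=1 and b=1] by simp
    finally show "dual_emb M \<iota> (\<kappa> (x + y)) = dual_emb M \<iota> (\<kappa> x) + dual_emb M \<iota> (\<kappa> y)" .
  next
    fix r x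
    have "dual_emb M \<iota> (\<kappa> (r *\<^sub>R x)) = dual_emb M \<iota> (\<lambda>t. r * \<kappa> x t + 0 * \<kappa> x t)"
      using emb_scale[OF e2, of r x] mk by (intro dual_cong[OF _ _ _ e1]) auto
    also have "\<dots> = r *\<^sub>R dual_emb M \<iota> (\<kappa> x)"
      using dual_lin[OF e1 emb_L2[OF e2, of x] emb_L2[OF e2, of x], where a=r and b=0] by simp
    finally show "dual_emb M \<iota> (\<kappa> (r *\<^sub>R x)) = r *\<^sub>R dual_emb M \<iota> (\<kappa> x)" .
  next
    fix x
    have "norm (dual_emb M \<iota> (\<kappa> x)) \<le> C1 * L2norm M (\<kappa> x)" by (rule dual_norm[OF e1 C1 emb_L2[OF e2]])
    also have "\<dots> \<le> C1 * (C2 * norm x)" using C2(2)[of x] C1(1) by (intro mult_left_mono)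
    finally show "norm (dual_emb M \<iota> (\<kappa> x)) \<le> norm x * (C1 * C2)" by (simp add: algebra_simps)
  qed
qed




lemma geom_cauchy:
  fixes y :: "nat \<Rightarrow> 'w::real_normed_vector"
  assumes Q: "Q \<ge> 0" and r: "0 \<le> r" "r < 1" and d: "\<And>k. norm (y (Suc k) - y k) \<le> Q * r^k"
  shows "Cauchy y"
proof -
  have b: "norm (y (m + j) - y m) \<le> Q * r^m * (1 - r^j) / (1 - r)" for m j
  proof (induction j)
    case 0 show ?case by simp
  next
    case (Suc j)
    have "y (m + Suc j) - y m = (y (Suc (m+j)) - y (m+j)) + (y (m+j) - y m)" by simp
    hence "norm (y (m + Suc j) - y m) \<le> norm (y (Suc (m+j)) - y (m+j)) + norm (y (m+j) - y m)"
      by (metis norm_triangle_ineq)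
    also have "\<dots> \<le> Q * r^(m+j) + Q * r^m * (1 - r^j) / (1 - r)" using d[of "m+j"] Suc by linarith
    also have "\<dots> = Q * r^m * (1 - r^Suc j) / (1 - r)" using r
      by (simp add: power_add field_simps)
    finally show ?case .
  qed
  have b2: "norm (y (m + j) - y m) \<le> Q * r^m / (1 - r)" for m j
  proof -
    have "Q * r^m * (1 - r^j) \<le> Q * r^m * 1" using r Q by (intro mult_left_mono) auto
    hence "Q * r^m * (1 - r^j) / (1 - r) \<le> Q * r^m / (1 - r)" using r by (simp add: divide_right_mono)
    thus ?thesis using b[of m j] by linarith
  qed
  show ?thesis
  proof (rule metric_CauchyI)
    fix e :: real assume e: "e > 0"
    have "(\<lambda>n. Q * r^n / (1 - r)) \<longlonglongrightarrow> Q * 0 / (1 - r)"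
      using r by (intro tendsto_intros LIMSEQ_power_zero) auto
    from LIMSEQ_D[OF this, of "e/2"] e obtain N where "norm (Q * r^N / (1 - r) - Q * 0 / (1 - r)) < e/2"
      by auto
    hence N: "Q * r^N / (1 - r) < e/2" using Q r by simp
    show "\<exists>N. \<forall>m\<ge>N. \<forall>n\<ge>N. dist (y m) (y n) < e"
    proof (intro exI allI impI)
      fix p q assume pq: "N \<le> p" "N \<le> q"
      have "norm (y p - y N) \<le> Q * r^N / (1 - r)" using b2[of N "p - N"] pq by simp
      moreover have "norm (y q - y N) \<le> Q * r^N / (1 - r)" using b2[of N "q - N"] pq by simp
      moreover have "dist (y p) (y q) \<le> norm (y p - y N) + norm (y q - y N)"
        by (metis dist_norm dist_triangle2)
      ultimately show "dist (y p) (y q) < e" using N by linarith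
    qed
  qed
qed

lemma L2norm_scale: "L2norm M (\<lambda>x. r * f x) = \<bar>r\<bar> * L2norm M f"
proof -
  have "(LINT x|M. (r * f x)\<^sup>2) = r\<^sup>2 * (LINT x|M. (f x)\<^sup>2)"
    by (simp add: power_mult_distrib)
  thus ?thesis unfolding L2norm_def by (simp add: real_sqrt_mult)
qed




theorem mainTheorem16:
  fixes M :: "'a measure"
    and \<iota> :: "'v::{real_inner, complete_space} \<Rightarrow> 'a \<Rightarrow> real"
    and \<kappa> :: "'w::{real_inner, complete_space} \<Rightarrow> 'a \<Rightarrow> real"
    and A :: "'v \<Rightarrow>\<^sub>L ('v \<Rightarrow>\<^sub>L real)"
    and L :: "'w \<Rightarrow>\<^sub>L ('w \<Rightarrow>\<^sub>L real)"
    and P Pstar :: "('w \<Rightarrow>\<^sub>L real) \<Rightarrow>\<^sub>L 'w"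
    and K :: "'v set"
    and c \<alpha> :: real
    and \<zeta> :: "'v \<Rightarrow>\<^sub>L real"
    and G :: "('v \<Rightarrow>\<^sub>L real) \<Rightarrow>\<^sub>L 'v"
  assumes M_finite: "finite_measure M"
    and M_complete: "complete_measure M"
    and V_separable: "\<exists>D :: 'v set. countable D \<and> closure D = UNIV"
    and V_emb: "cont_dense_embedding M \<iota>"
    and V_compact: "compact_embedding M \<iota>"
    and V_trunc: "\<And>v a1 a2. a1 \<le> 0 \<Longrightarrow> 0 \<le> a2 \<Longrightarrow>
                    \<exists>w. ae_eq M (\<iota> w) (\<lambda>x. min a2 (max a1 (\<iota> v x)))"
    and A_sym: "\<And>x y. A x y = A y x"
    and c_pos: "c > 0"
    and A_coercive: "\<And>v. A v v \<ge> c * (norm v)\<^sup>2"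
    and A_trunc: "\<And>v a1 a2. a1 \<le> 0 \<Longrightarrow> 0 \<le> a2 \<Longrightarrow>
         min (A v (trunc M \<iota> a1 a2 v)) (A (trunc M \<iota> a1 a2 v) v)
           \<ge> A (trunc M \<iota> a1 a2 v) (trunc M \<iota> a1 a2 v)"
    and W_emb: "cont_dense_embedding M \<kappa>"
    and L_bij: "bij (blinfun_apply L)"
    and P_inv1: "\<And>z. L (P z) = z"
    and P_inv2: "\<And>w. P (L w) = w"
    and Pstar_adj: "\<And>w1 w2 :: 'w \<Rightarrow>\<^sub>L real. blinfun_apply w1 (blinfun_apply P w2) = blinfun_apply w2 (blinfun_apply Pstar w1)"
    and K_nonempty: "K \<noteq> {}"
    and K_closed: "closed K"
    and K_convex: "convex K"
    and K_max: "\<And>v z. v \<in> K \<Longrightarrow> \<exists>w\<in>K. ae_eq M (\<iota> w) (\<lambda>x. \<iota> v x + max 0 (\<iota> z x))"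
    and K_min: "\<And>v1 v2. v1 \<in> K \<Longrightarrow> v2 \<in> K \<Longrightarrow> \<exists>w\<in>K. ae_eq M (\<iota> w) (\<lambda>x. min (\<iota> v1 x) (\<iota> v2 x))"
    and alpha_pos: "\<alpha> > 0"
    and G_in: "G \<in> bouligand_sw (VI_solution A K) \<zeta>"
  defines "T \<equiv> (\<lambda>f x. f x + (1 / \<alpha>) *
              \<kappa> (P (dual_emb M \<kappa> (\<iota> (G (dual_emb M \<iota> (\<kappa> (Pstar (dual_emb M \<kappa> f)))))))) x)"
  shows "(\<forall>f\<in>L2 M. T f \<in> L2 M)
       \<and> (\<forall>g\<in>L2 M. \<exists>f\<in>L2 M. ae_eq M (T f) g)
       \<and> (\<forall>f\<in>L2 M. ae_eq M (T f) (\<lambda>x. 0) \<longrightarrow> ae_eq M f (\<lambda>x. 0))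
       \<and> (\<forall>f\<in>L2 M. \<forall>g\<in>L2 M. ae_eq M (T f) g \<longrightarrow> L2norm M f \<le> L2norm M g)"
proof -
  obtain Ci where Ci: "Ci \<ge> 0" "\<And>v. L2norm M (\<iota> v) \<le> Ci * norm v" using emb_const[OF V_emb] by blast
  obtain Ck where Ck: "Ck \<ge> 0" "\<And>v. L2norm M (\<kappa> v) \<le> Ck * norm v" using emb_const[OF W_emb] by blast
  define E1 :: "'w \<Rightarrow>\<^sub>L ('v \<Rightarrow>\<^sub>L real)" where "E1 = Blinfun (\<lambda>y. dual_emb M \<iota> (\<kappa> y))"
  define E2 :: "'v \<Rightarrow>\<^sub>L ('w \<Rightarrow>\<^sub>L real)" where "E2 = Blinfun (\<lambda>v. dual_emb M \<kappa> (\<iota> v))"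
  define E3 :: "'w \<Rightarrow>\<^sub>L ('w \<Rightarrow>\<^sub>L real)" where "E3 = Blinfun (\<lambda>y. dual_emb M \<kappa> (\<kappa> y))"
  have E1a: "\<And>y. E1 y = dual_emb M \<iota> (\<kappa> y)"
    unfolding E1_def using bounded_linear_Blinfun_apply[OF comp_bl[OF V_emb W_emb]] by simp
  have E2a: "\<And>v. E2 v = dual_emb M \<kappa> (\<iota> v)"
    unfolding E2_def using bounded_linear_Blinfun_apply[OF comp_bl[OF W_emb V_emb]] by simp
  have E3a: "\<And>y. E3 y = dual_emb M \<kappa> (\<kappa> y)"
    unfolding E3_def using bounded_linear_Blinfun_apply[OF comp_bl[OF W_emb W_emb]] by simp
  define MM where "MM = P o\<^sub>L E2 o\<^sub>L G o\<^sub>L E1"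
  have MMa: "\<And>y. MM y = P (E2 (G (E1 y)))" by (simp add: MM_def)
  define Dk where "Dk = dual_emb M \<kappa>"
  define B where "B = (\<lambda>f x. (1/\<alpha>) * \<kappa> (MM (Pstar (Dk f))) x)"
  have T_eq: "T = (\<lambda>f x. f x + B f x)" unfolding T_def B_def MMa E1a E2a Dk_def by simp
  have Gpos: "\<And>z. blinfun_apply z (G z) \<ge> 0"
    by (rule G_pos[OF S_mono[OF A_sym c_pos A_coercive K_nonempty K_closed K_convex] G_in])
  have BL2: "B f \<in> L2 M" for f unfolding B_def by (intro L2_scale emb_L2[OF W_emb])
  have TL2: "f \<in> L2 M \<Longrightarrow> T f \<in> L2 M" for f unfolding T_eq by (intro L2_add BL2)
  have pos: "(LINT x|M. B f x * f x) \<ge> 0" if f: "f \<in> L2 M" for f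
  proof -
    define y where "y = Pstar (Dk f)"
    define u where "u = G (E1 y)"
    have "(LINT x|M. \<kappa> (MM y) x * f x) = (LINT x|M. f x * \<kappa> (P (E2 u)) x)"
      unfolding MMa u_def by (simp add: mult.commute)
    also have "\<dots> = Dk f (P (E2 u))" unfolding Dk_def by (rule dual_apply[OF W_emb f, symmetric])
    also have "\<dots> = E2 u y" unfolding y_def by (rule Pstar_adj)
    also have "\<dots> = (LINT x|M. \<iota> u x * \<kappa> y x)" unfolding E2a by (rule dual_apply[OF W_emb emb_L2[OF V_emb]])
    also have "\<dots> = E1 y u" unfolding E1a by (simp add: dual_apply[OF V_emb emb_L2[OF W_emb]] mult.commute)
    also have "\<dots> \<ge> 0" unfolding u_def by (rule Gpos)
    finally have "(LINT x|M. \<kappa> (MM y) x * f x) \<ge> 0" .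
    moreover have "(LINT x|M. B f x * f x) = (1/\<alpha>) * (LINT x|M. \<kappa> (MM y) x * f x)"
      unfolding B_def y_def by (simp add: mult.assoc)
    ultimately show ?thesis using alpha_pos by simp
  qed
  define \<beta> where "\<beta> = (1/\<alpha>) * (Ck * norm MM * norm Pstar * Ck)"
  have \<beta>0: "\<beta> \<ge> 0" unfolding \<beta>_def using alpha_pos Ck by simp
  have Bbound: "L2norm M (B f) \<le> \<beta> * L2norm M f" if f: "f \<in> L2 M" for f
  proof -
    have "L2norm M (B f) = (1/\<alpha>) * L2norm M (\<kappa> (MM (Pstar (Dk f))))"
      unfolding B_def L2norm_scale using alpha_pos by simp
    also have "\<dots> \<le> (1/\<alpha>) * (Ck * (norm MM * (norm Pstar * (Ck * L2norm M f))))"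
    proof -
      have "norm (Dk f) \<le> Ck * L2norm M f" unfolding Dk_def by (rule dual_norm[OF W_emb Ck f])
      hence "norm (Pstar (Dk f)) \<le> norm Pstar * (Ck * L2norm M f)"
        by (meson norm_blinfun norm_ge_zero order_trans mult_left_mono)
      hence "norm (MM (Pstar (Dk f))) \<le> norm MM * (norm Pstar * (Ck * L2norm M f))"
        by (meson norm_blinfun norm_ge_zero order_trans mult_left_mono)
      hence "L2norm M (\<kappa> (MM (Pstar (Dk f)))) \<le> Ck * (norm MM * (norm Pstar * (Ck * L2norm M f)))"
        using Ck by (meson order_trans mult_left_mono)
      thus ?thesis using alpha_pos by (intro mult_left_mono) auto
    qed
    also have "\<dots> = \<beta> * L2norm M f" unfolding \<beta>_def by (simp add: algebra_simps)
    finally show ?thesis .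
  qed
  have inner: "(LINT x|M. T f x * f x) \<ge> (LINT x|M. (f x)\<^sup>2)" if f: "f \<in> L2 M" for f
  proof -
    have "(LINT x|M. T f x * f x) = (LINT x|M. (f x)\<^sup>2 + B f x * f x)"
      unfolding T_eq by (simp add: power2_eq_square algebra_simps)
    also have "\<dots> = (LINT x|M. (f x)\<^sup>2) + (LINT x|M. B f x * f x)"
      using L2_sq[OF f] L2_prod[OF BL2 f] by simp
    finally show ?thesis using pos[OF f] by simp
  qed
  have normb: "L2norm M f \<le> L2norm M g" if f: "f \<in> L2 M" and g: "g \<in> L2 M" and e: "ae_eq M (T f) g" for f g
  proof -
    have ae: "AE x in M. T f x * f x = g x * f x" using e unfolding ae_eq_def by eventually_elim simp
    have "(LINT x|M. T f x * f x) = (LINT x|M. g x * f x)"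
      by (rule integral_cong_AE[OF _ _ ae]) (intro borel_measurable_times L2_meas TL2 f g)+
    hence "(L2norm M f)\<^sup>2 \<le> (LINT x|M. g x * f x)" using inner[OF f] L2norm_sq[OF f] by simp
    also have "\<dots> \<le> L2norm M g * L2norm M f" using CS[OF g f] by simp
    finally have h: "L2norm M f * L2norm M f \<le> L2norm M g * L2norm M f" by (simp add: power2_eq_square)
    show ?thesis
    proof (cases "L2norm M f = 0")
      case True thus ?thesis using L2norm_nonneg[of M g] by simp
    next
      case False hence "L2norm M f > 0" using L2norm_nonneg[of M f] by simp
      with h show ?thesis by simp
    qed
  qed
  have part3: "ae_eq M f (\<lambda>x. 0)" if f: "f \<in> L2 M" and e: "ae_eq M (T f) (\<lambda>x. 0)" for f
  proof -
    have "L2norm M f \<le> L2norm M (\<lambda>x. 0)" by (rule normb[OF f L2_zero e])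
    moreover have "L2norm M (\<lambda>x. 0) = 0" by (simp add: L2norm_def)
    ultimately have "L2norm M f = 0" using L2norm_nonneg[of M f] by linarith
    hence "(LINT x|M. (f x)\<^sup>2) = 0" using L2norm_sq[OF f] by simp
    hence "AE x in M. (f x)\<^sup>2 = 0" using integral_nonneg_eq_0_iff_AE[OF L2_sq[OF f]] by simp
    thus ?thesis unfolding ae_eq_def by eventually_elim simp
  qed
  have Tpt: "\<And>f x. T f x = f x + B f x" unfolding T_eq by simp
  have part2: "\<exists>f\<in>L2 M. ae_eq M (T f) g" if g: "g \<in> L2 M" for g
  proof -
    define K2 where "K2 = 2 * (1 + \<beta>\<^sup>2)"
    define \<epsilon> where "\<epsilon> = 1 / K2"
    define q where "q = 1 - \<epsilon>"
    have K2: "K2 \<ge> 2" unfolding K2_def by simp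
    have \<epsilon>: "0 < \<epsilon>" "\<epsilon> \<le> 1/2" unfolding \<epsilon>_def using K2 by (auto simp: field_simps)
    have \<epsilon>K2: "\<epsilon>\<^sup>2 * K2 = \<epsilon>" unfolding \<epsilon>_def using K2 by (simp add: power2_eq_square)
    have q: "0 \<le> q" "q < 1" unfolding q_def using \<epsilon> by auto
    have Tsq: "(LINT x|M. (T f x)\<^sup>2) \<le> K2 * (LINT x|M. (f x)\<^sup>2)" if f: "f \<in> L2 M" for f
    proof -
      have "(LINT x|M. (T f x)\<^sup>2) \<le> (LINT x|M. 2 * (f x)\<^sup>2 + 2 * (B f x)\<^sup>2)"
      proof (rule integral_mono)
        show "integrable M (\<lambda>x. (T f x)\<^sup>2)" using L2_sq[OF TL2[OF f]] .
        show "integrable M (\<lambda>x. 2 * (f x)\<^sup>2 + 2 * (B f x)\<^sup>2)"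
          by (intro Bochner_Integration.integrable_add integrable_mult_right L2_sq f BL2)
        fix x
        have "(f x + B f x)\<^sup>2 + (f x - B f x)\<^sup>2 = 2 * (f x)\<^sup>2 + 2 * (B f x)\<^sup>2"
          by (simp add: power2_eq_square algebra_simps)
        moreover have "0 \<le> (f x - B f x)\<^sup>2" by simp
        ultimately show "(T f x)\<^sup>2 \<le> 2 * (f x)\<^sup>2 + 2 * (B f x)\<^sup>2" unfolding Tpt by linarith
      qed
      also have "\<dots> = 2 * (LINT x|M. (f x)\<^sup>2) + 2 * (LINT x|M. (B f x)\<^sup>2)"
        using L2_sq[OF f] L2_sq[OF BL2] by simp
      also have "(LINT x|M. (B f x)\<^sup>2) \<le> \<beta>\<^sup>2 * (LINT x|M. (f x)\<^sup>2)"
      proof -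
        have "(L2norm M (B f))\<^sup>2 \<le> (\<beta> * L2norm M f)\<^sup>2"
          using Bbound[OF f] L2norm_nonneg by (intro power_mono) auto
        thus ?thesis using L2norm_sq[OF BL2] L2norm_sq[OF f] by (simp add: power_mult_distrib)
      qed
      hence "2 * (LINT x|M. (f x)\<^sup>2) + 2 * (LINT x|M. (B f x)\<^sup>2) \<le> K2 * (LINT x|M. (f x)\<^sup>2)"
        unfolding K2_def by (simp add: algebra_simps)
      finally show ?thesis .
    qed
    have contr: "(LINT x|M. (h x - \<epsilon> * T h x)\<^sup>2) \<le> q * (LINT x|M. (h x)\<^sup>2)" if h: "h \<in> L2 M" for h
    proof -
      define I1 where "I1 = (LINT x|M. (h x)\<^sup>2)"
      define I2 where "I2 = (LINT x|M. T h x * h x)"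
      define I3 where "I3 = (LINT x|M. (T h x)\<^sup>2)"
      have e: "(\<lambda>x. (h x - \<epsilon> * T h x)\<^sup>2) = (\<lambda>x. (h x)\<^sup>2 - 2 * \<epsilon> * (T h x * h x) + \<epsilon>\<^sup>2 * (T h x)\<^sup>2)"
        by (simp add: power2_eq_square algebra_simps)
      have "(LINT x|M. (h x - \<epsilon> * T h x)\<^sup>2) = I1 - 2 * \<epsilon> * I2 + \<epsilon>\<^sup>2 * I3"
        unfolding e I1_def I2_def I3_def using L2_sq[OF h] L2_prod[OF TL2[OF h] h] L2_sq[OF TL2[OF h]]
        by simp
      moreover have "2 * \<epsilon> * I1 \<le> 2 * \<epsilon> * I2" unfolding I1_def I2_def using inner[OF h] \<epsilon>
        by (intro mult_left_mono) auto
      moreover have "\<epsilon>\<^sup>2 * I3 \<le> \<epsilon>\<^sup>2 * (K2 * I1)" unfolding I1_def I3_def using Tsq[OF h]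
        by (intro mult_left_mono) auto
      moreover have "\<epsilon>\<^sup>2 * (K2 * I1) = \<epsilon> * I1" using \<epsilon>K2 by (metis mult.assoc)
      moreover have "q * I1 = I1 - \<epsilon> * I1" unfolding q_def by (simp add: algebra_simps)
      ultimately have "(LINT x|M. (h x - \<epsilon> * T h x)\<^sup>2) \<le> q * I1" by linarith
      thus ?thesis by (simp add: I1_def)
    qed
    define Fl where "Fl = (\<lambda>f x. f x - \<epsilon> * (T f x - g x))"
    define fs where "fs = (\<lambda>k. (Fl ^^ k) g)"
    have fs0: "fs 0 = g" and fsS: "\<And>k. fs (Suc k) = Fl (fs k)" by (simp_all add: fs_def)
    have fsL2: "fs k \<in> L2 M" for k
    proof (induction k)
      case 0 thus ?case using g fs0 by simp
    next
      case (Suc k) thus ?case unfolding fsS Fl_def by (intro L2_diff L2_scale TL2 g)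
    qed
    define y0 where "y0 = Pstar (Dk g)"
    define C where "C = (1/\<alpha>) *\<^sub>R (Pstar o\<^sub>L E3 o\<^sub>L MM)"
    have Ca: "\<And>y. C y = (1/\<alpha>) *\<^sub>R Pstar (E3 (MM y))" by (simp add: C_def blinfun.bilinear_simps)
    have DkB: "Dk (B f) = (1/\<alpha>) *\<^sub>R E3 (MM (Pstar (Dk f)))" for f
    proof -
      define w where "w = MM (Pstar (Dk f))"
      have "B f = (\<lambda>x. (1/\<alpha>) * \<kappa> w x + 0 * \<kappa> w x)" by (simp add: B_def w_def)
      hence "Dk (B f) = Dk (\<lambda>x. (1/\<alpha>) * \<kappa> w x + 0 * \<kappa> w x)" by simp
      also have "\<dots> = (1/\<alpha>) *\<^sub>R Dk (\<kappa> w) + 0 *\<^sub>R Dk (\<kappa> w)"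
        unfolding Dk_def by (rule dual_lin[OF W_emb emb_L2[OF W_emb, of w] emb_L2[OF W_emb, of w]])
      finally have "Dk (B f) = (1/\<alpha>) *\<^sub>R Dk (\<kappa> w) + 0 *\<^sub>R Dk (\<kappa> w)" .
      thus ?thesis unfolding w_def Dk_def E3a by simp
    qed
    have PDkB: "Pstar (Dk (B f)) = C (Pstar (Dk f))" for f
      unfolding DkB Ca by (simp add: blinfun.bilinear_simps)
    define ys where "ys = (\<lambda>k. Pstar (Dk (fs k)))"
    define Fy where "Fy = (\<lambda>y. y - \<epsilon> *\<^sub>R (y + C y - y0))"
    have ysS: "ys (Suc k) = Fy (ys k)" for k
    proof -
      have e1: "Fl (fs k) = (\<lambda>x. (1 - \<epsilon>) * fs k x + (- \<epsilon>) * (1 * B (fs k) x + (-1) * g x))"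
        unfolding Fl_def Tpt by (simp add: algebra_simps)
      have L: "(\<lambda>x. 1 * B (fs k) x + (-1) * g x) \<in> L2 M" by (intro L2_add L2_scale BL2 g)
      have "Dk (Fl (fs k)) = (1 - \<epsilon>) *\<^sub>R Dk (fs k) + (- \<epsilon>) *\<^sub>R Dk (\<lambda>x. 1 * B (fs k) x + (-1) * g x)"
        unfolding e1 Dk_def by (rule dual_lin[OF W_emb fsL2[of k] L])
      also have "Dk (\<lambda>x. 1 * B (fs k) x + (-1) * g x) = 1 *\<^sub>R Dk (B (fs k)) + (-1) *\<^sub>R Dk g"
        unfolding Dk_def by (rule dual_lin[OF W_emb BL2[of "fs k"] g])
      finally have "Dk (Fl (fs k)) = (1 - \<epsilon>) *\<^sub>R Dk (fs k) + (- \<epsilon>) *\<^sub>R (1 *\<^sub>R Dk (B (fs k)) + (-1) *\<^sub>R Dk g)" .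
      hence "ys (Suc k) = (1 - \<epsilon>) *\<^sub>R ys k + (- \<epsilon>) *\<^sub>R (C (ys k) - y0)"
        unfolding ys_def fsS y0_def by (simp add: blinfun.bilinear_simps PDkB)
      thus ?thesis unfolding Fy_def by (simp add: algebra_simps)
    qed
    define d where "d = (\<lambda>k x. fs (Suc k) x - fs k x)"
    have dL2: "d k \<in> L2 M" for k unfolding d_def by (intro L2_diff fsL2)
    have PDkd: "Pstar (Dk (d k)) = ys (Suc k) - ys k" for k
    proof -
      have "d k = (\<lambda>x. 1 * fs (Suc k) x + (-1) * fs k x)" unfolding d_def by simp
      hence "Dk (d k) = Dk (\<lambda>x. 1 * fs (Suc k) x + (-1) * fs k x)" by simp
      also have "\<dots> = 1 *\<^sub>R Dk (fs (Suc k)) + (-1) *\<^sub>R Dk (fs k)"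
        unfolding Dk_def by (rule dual_lin[OF W_emb fsL2 fsL2])
      finally have "Dk (d k) = 1 *\<^sub>R Dk (fs (Suc k)) + (-1) *\<^sub>R Dk (fs k)" .
      thus ?thesis unfolding ys_def by (simp add: blinfun.bilinear_simps)
    qed
    have dstep: "ae_eq M (d (Suc k)) (\<lambda>x. d k x - \<epsilon> * T (d k) x)" for k
    proof -
      have ex: "d (Suc k) x = d k x - \<epsilon> * d k x - \<epsilon> * (B (fs (Suc k)) x - B (fs k) x)" for x
        unfolding d_def fsS[of "Suc k"] fsS[of k] by (simp add: Fl_def Tpt algebra_simps)
      have Bd: "B (d k) = (\<lambda>x. (1/\<alpha>) * \<kappa> (MM (ys (Suc k)) - MM (ys k)) x)"
        unfolding B_def PDkd by (simp add: blinfun.bilinear_simps)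
      have "AE x in M. \<kappa> (MM (ys (Suc k)) - MM (ys k)) x = \<kappa> (MM (ys (Suc k))) x - \<kappa> (MM (ys k)) x"
        using emb_diff[OF W_emb] unfolding ae_eq_def by blast
      thus ?thesis unfolding ae_eq_def
      proof eventually_elim
        case (elim x)
        show ?case unfolding ex Tpt Bd elim by (simp add: B_def ys_def algebra_simps)
      qed
    qed
    define s where "s = (\<lambda>k. LINT x|M. (d k x)\<^sup>2)"
    have s0: "s k \<ge> 0" for k unfolding s_def by (simp add: integral_nonneg_AE)
    have sS: "s (Suc k) \<le> q * s k" for k
    proof -
      have ae: "AE x in M. (d (Suc k) x)\<^sup>2 = (d k x - \<epsilon> * T (d k) x)\<^sup>2"
        using dstep[of k] unfolding ae_eq_def by eventually_elim simp
      have "s (Suc k) = (LINT x|M. (d k x - \<epsilon> * T (d k) x)\<^sup>2)" unfolding s_def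
        by (rule integral_cong_AE[OF _ _ ae])
          (intro borel_measurable_power borel_measurable_diff borel_measurable_times borel_measurable_const
            L2_meas dL2 TL2)+
      also have "\<dots> \<le> q * s k" unfolding s_def by (rule contr[OF dL2])
      finally show ?thesis .
    qed
    have sk: "s k \<le> q^k * s 0" for k
    proof (induction k)
      case 0 show ?case by simp
    next
      case (Suc k)
      have "s (Suc k) \<le> q * s k" by (rule sS)
      also have "\<dots> \<le> q * (q^k * s 0)" using Suc q by (intro mult_left_mono) auto
      finally show ?case by (simp add: mult.assoc)
    qed
    define Q where "Q = norm Pstar * Ck * sqrt (s 0)"
    have Q0: "Q \<ge> 0" unfolding Q_def using Ck s0 by simp
    have r: "0 \<le> sqrt q" "sqrt q < 1" using q by auto
    have dy: "norm (ys (Suc k) - ys k) \<le> Q * sqrt q ^ k" for k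
    proof -
      have "norm (ys (Suc k) - ys k) = norm (Pstar (Dk (d k)))" using PDkd by simp
      also have "\<dots> \<le> norm Pstar * norm (Dk (d k))" by (rule norm_blinfun)
      also have "\<dots> \<le> norm Pstar * (Ck * L2norm M (d k))"
        unfolding Dk_def by (intro mult_left_mono dual_norm[OF W_emb Ck dL2]) auto
      also have "L2norm M (d k) = sqrt (s k)" unfolding L2norm_def s_def by simp
      also have "sqrt (s k) \<le> sqrt (s 0) * sqrt q ^ k"
        using sk[of k] by (metis real_sqrt_le_mono real_sqrt_mult real_sqrt_power mult.commute)
      finally show ?thesis unfolding Q_def using Ck
        by (smt (verit) mult.assoc mult_left_mono norm_ge_zero mult_nonneg_nonneg)
    qed
    have "Cauchy ys" by (rule geom_cauchy[OF Q0 r dy])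
    then obtain y where lim: "ys \<longlonglongrightarrow> y" using Cauchy_convergent_iff convergent_def by blast
    have "(\<lambda>k. Fy (ys k)) \<longlonglongrightarrow> Fy y" unfolding Fy_def by (intro tendsto_intros lim)
    moreover have "(\<lambda>k. Fy (ys k)) \<longlonglongrightarrow> y" using LIMSEQ_Suc[OF lim] unfolding ysS .
    ultimately have "Fy y = y" by (rule LIMSEQ_unique)
    hence "\<epsilon> *\<^sub>R (y + C y - y0) = 0" unfolding Fy_def by simp
    hence fixy: "y + C y - y0 = 0" using \<epsilon> by simp
    define f where "f = (\<lambda>x. 1 * g x + (-(1/\<alpha>)) * \<kappa> (MM y) x)"
    have fL2: "f \<in> L2 M" unfolding f_def by (intro L2_add L2_scale g emb_L2[OF W_emb])
    have "Dk f = 1 *\<^sub>R Dk g + (-(1/\<alpha>)) *\<^sub>R Dk (\<kappa> (MM y))"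
      unfolding f_def Dk_def by (rule dual_lin[OF W_emb g emb_L2[OF W_emb]])
    hence "Pstar (Dk f) = y0 - C y" unfolding y0_def Ca Dk_def E3a by (simp add: blinfun.bilinear_simps)
    also have "\<dots> = y" using fixy by (simp add: algebra_simps)
    finally have Pf: "Pstar (Dk f) = y" .
    have "T f = g" unfolding T_eq B_def Pf by (rule ext) (simp add: f_def)
    thus ?thesis using fL2 unfolding ae_eq_def by auto
  qed
  show ?thesis using TL2 part2 part3 normb by blast
qed


end
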